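(* Let $x\in\mathcal{X}$. Then $x$ is bilevel feasible if and only if $c^\top x = g(x_{\mathcal{A}_1})$.
   Context: Single-commodity network pricing setting: $G=(\mathcal{V},\mathcal{A})$ is a directed graph with arc costs $c\ge0$, arcs partitioned into a nonempty set $\mathcal{A}_1\subsetneq\mathcal{A}$ of tolled arcs and toll-free arcs $\mathcal{A}_2=\mathcal{A}\setminus\mathcal{A}_1$, $n=|\mathcal{A}_1|$; $N$ is the node–arc incidence matrix; there is one commodity with origin $o$ and destination $d$ and an $o$–$d$ path of toll-free arcs exists; $b_o=1$, $b_d=-1$, $b_i=0$ otherwise. Let $\mathcal{X}=\{x\in\mathbb{R}^{\mathcal{A}}: Nx=b,\ x\ge0\}$ and, for $x\in\mathbb{R}^{\mathcal{A}}$, let $x_{\mathcal{A}_1}\in\mathbb{R}^n$ be its restriction to $\mathcal{A}_1$. Define $f:\mathbb{R}^n\to\mathbb{R}\cup\{-\infty\}$ by $f(t)=\min\{c^\top x+t^\top x_{\mathcal{A}_1}: x\in\mathcal{X}\}$ for $t\ge0$ and $f(t)=-\infty$ otherwise, and $g(w)=\sup_{t\in\mathbb{R}^n}\{f(t)-t^\top w\}$ for $w\in\mathbb{R}^n$. A point $x\in\mathcal{X}$ is called bilevel feasible if the hyperplane $\{(t,z)\in\mathbb{R}^n\times\mathbb{R}: z=-c^\top x-t^\top x_{\mathcal{A}_1}\}$ supports the epigraph $\operatorname{epi}(-f)$, i.e. $\operatorname{epi}(-f)\subseteq\{(t,z): z\ge -c^\top x - t^\top x_{\mathcal{A}_1}\}$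 and the hyperplane meets $\operatorname{epi}(-f)$. *)

theory Defs
  imports "HOL-Analysis.Analysis"
begin

text \<open>Arcs are the elements of a finite type 'a (so the arc set is UNIV);
  each arc has a tail and a head vertex.
  Tolls are functions 'a => real of which only the coordinates in A1 matter.\<close>

text \<open>x in X : N x = b, x >= 0 (N node-arc incidence matrix: +1 at tail, -1 at head).\<close>
definition flow_feasible ::
  "('a::finite \<Rightarrow> 'v) \<Rightarrow> ('a \<Rightarrow> 'v) \<Rightarrow> 'v \<Rightarrow> 'v \<Rightarrow> ('a \<Rightarrow> real) \<Rightarrow> bool" where
  "flow_feasible tail head orig dest x \<longleftrightarrow>
     (\<forall>a. 0 \<le> x a) \<and>
     (\<forall>i. (\<Sum>a\<in>{a. tail a = i}. x a) - (\<Sum>a\<in>{a. head a = i}. x a)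
          = (if i = orig then 1 else if i = dest then -1 else 0))"

fun is_path :: "('a \<Rightarrow> 'v) \<Rightarrow> ('a \<Rightarrow> 'v) \<Rightarrow> 'v \<Rightarrow> 'a list \<Rightarrow> 'v \<Rightarrow> bool" where
  "is_path tail head u [] v \<longleftrightarrow> u = v"
| "is_path tail head u (a # as) v \<longleftrightarrow> tail a = u \<and> is_path tail head (head a) as v"

definition leader_cost ::
  "('a::finite \<Rightarrow> real) \<Rightarrow> 'a set \<Rightarrow> ('a \<Rightarrow> real) \<Rightarrow> ('a \<Rightarrow> real) \<Rightarrow> real" where
  "leader_cost c A1 t x = (\<Sum>a\<in>UNIV. c a * x a) + (\<Sum>a\<in>A1. t a * x a)"

definition pricing_f ::
  "('a::finite \<Rightarrow> real) \<Rightarrow> 'a set \<Rightarrow> ('a \<Rightarrow> 'v) \<Rightarrow> ('a \<Rightarrow> 'v) \<Rightarrow> 'v \<Rightarrow> 'v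
     \<Rightarrow> ('a \<Rightarrow> real) \<Rightarrow> ereal" where
  "pricing_f c A1 tail head orig dest t =
     (if (\<forall>a\<in>A1. 0 \<le> t a)
      then Inf {ereal (leader_cost c A1 t x) | x. flow_feasible tail head orig dest x}
      else -\<infinity>)"

definition pricing_g ::
  "('a::finite \<Rightarrow> real) \<Rightarrow> 'a set \<Rightarrow> ('a \<Rightarrow> 'v) \<Rightarrow> ('a \<Rightarrow> 'v) \<Rightarrow> 'v \<Rightarrow> 'v
     \<Rightarrow> ('a \<Rightarrow> real) \<Rightarrow> ereal" where
  "pricing_g c A1 tail head orig dest w =
     (SUP t. pricing_f c A1 tail head orig dest t - ereal (\<Sum>a\<in>A1. t a * w a))"

text \<open>Bilevel feasibility: the hyperplane z = -c^T x - t^T x_{A1} supports epi(-f).\<close>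
definition bilevel_feasible ::
  "('a::finite \<Rightarrow> real) \<Rightarrow> 'a set \<Rightarrow> ('a \<Rightarrow> 'v) \<Rightarrow> ('a \<Rightarrow> 'v) \<Rightarrow> 'v \<Rightarrow> 'v
     \<Rightarrow> ('a \<Rightarrow> real) \<Rightarrow> bool" where
  "bilevel_feasible c A1 tail head orig dest x \<longleftrightarrow>
     (\<forall>t (z::real). - pricing_f c A1 tail head orig dest t \<le> ereal z
         \<longrightarrow> - leader_cost c A1 t x \<le> z) \<and>
     (\<exists>t (z::real). - pricing_f c A1 tail head orig dest t \<le> ereal z
         \<and> z = - leader_cost c A1 t x)"

end

theory Submission
  imports Defs "HOL-Analysis.Analysis"
begin


lemma hull_sum_mem:
  fixes u :: "'i \<Rightarrow> 'b::real_vector"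
  assumes "finite I" "\<And>i. i \<in> I \<Longrightarrow> u i \<in> convex_cone hull G"
  shows "sum u I \<in> convex_cone hull G"
  using assms by (induction I rule: finite_induct) (auto intro: convex_cone_hull_add convex_cone_hull_contains_0)

lemma sum_ind_scale:
  fixes f :: "'i \<Rightarrow> 'b::real_vector"
  assumes "finite A" "a \<in> A"
  shows "(\<Sum>b\<in>A. (if b = a then 1 else 0) *\<^sub>R f b) = f a"
proof -
  have "(\<Sum>b\<in>A. (if b = a then 1 else 0) *\<^sub>R f b) = (\<Sum>b\<in>A. if b = a then f b else 0)"
    by (rule sum.cong) auto
  also have "\<dots> = f a" using assms by (simp add: sum.delta')
  finally show ?thesis .
qed

lemma cone_attain:
  fixes A1 :: "'a set" and P :: "'b::finite \<Rightarrow> bool"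
    and \<alpha> :: "'b \<Rightarrow> real" and \<beta> :: "'b \<Rightarrow> 'a \<Rightarrow> real"
  assumes fin: "finite A1"
    and approx: "\<And>m. m < M \<Longrightarrow> \<exists>t. (\<forall>a\<in>A1. 0 \<le> t a) \<and>
                   (\<forall>i. P i \<longrightarrow> m < \<alpha> i + (\<Sum>a\<in>A1. t a * \<beta> i a))"
  shows "\<exists>t. (\<forall>a\<in>A1. 0 \<le> t a) \<and> (\<forall>i. P i \<longrightarrow> M \<le> \<alpha> i + (\<Sum>a\<in>A1. t a * \<beta> i a))"
proof -
  define g :: "'a \<Rightarrow> real^'b" where "g a = (\<chi> i. if P i then \<beta> i a else 0)" for a
  define e :: "'b \<Rightarrow> real^'b" where "e i = - axis i 1" for i
  define G where "G = g ` A1 \<union> range e"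
  define C where "C = convex_cone hull G"
  have "finite G" using fin by (simp add: G_def)
  then have clC: "closed C" unfolding C_def by (rule closed_convex_cone_hull)
  define u :: "real^'b" where "u = (\<chi> i. if P i then 1 else 0)"
  define v :: "real^'b" where "v = (\<chi> i. if P i then - \<alpha> i else 0)"
  define w where "w = (\<lambda>m::real. m *\<^sub>R u + v)"
  have wc: "w m $ i = (if P i then m - \<alpha> i else 0)" for m i
    by (simp add: w_def u_def v_def)
  have clM: "closed (w -` C)"
    using clC by (rule continuous_closed_vimage) (auto simp: w_def intro!: continuous_intros)
  have inM: "w m \<in> C" if mM: "m < M" for m
  proof -
    obtain t where t0: "\<forall>a\<in>A1. 0 \<le> t a" and tm: "\<forall>i. P i \<longrightarrow> m < \<alpha> i + (\<Sum>a\<in>A1. t a * \<beta> i a)"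
      using approx[OF mM] by blast
    define \<nu> where "\<nu> i = (if P i then \<alpha> i + (\<Sum>a\<in>A1. t a * \<beta> i a) - m else 0)" for i
    have eq: "w m = (\<Sum>a\<in>A1. t a *\<^sub>R g a) + (\<Sum>i\<in>UNIV. \<nu> i *\<^sub>R e i)"
    unfolding vec_eq_iff proof
      fix i
      have "(\<Sum>i'\<in>UNIV. \<nu> i' * (- axis i' 1 $ i)) = - \<nu> i"
        by (simp add: axis_def sum_negf if_distrib cong: if_cong)
      then show "w m $ i = ((\<Sum>a\<in>A1. t a *\<^sub>R g a) + (\<Sum>i\<in>UNIV. \<nu> i *\<^sub>R e i)) $ i"
        by (simp add: wc g_def e_def \<nu>_def)
    qed
    show ?thesis unfolding eq C_def
      apply (rule convex_cone_hull_add)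
       apply (rule hull_sum_mem[OF fin])
       apply (rule convex_cone_hull_mul)
      using t0 apply (auto simp: G_def intro: hull_inc)[2]
      apply (rule hull_sum_mem, simp)
      apply (rule convex_cone_hull_mul)
       apply (auto simp: G_def \<nu>_def intro: hull_inc)
      using tm less_imp_le by force
  qed
  have "M \<in> w -` C"
    unfolding closed_approachable[OF clM, symmetric]
  proof (intro allI impI)
    fix \<epsilon> :: real assume "\<epsilon> > 0"
    then show "\<exists>y\<in>w -` C. dist y M < \<epsilon>"
      by (intro bexI[of _ "M - \<epsilon>/2"]) (auto simp: dist_real_def intro: inM)
  qed
  then have wM: "w M \<in> C" by simp
  define K where "K = {(\<Sum>a\<in>A1. \<mu> a *\<^sub>R g a) + (\<Sum>i\<in>UNIV. \<nu> i *\<^sub>R e i) | \<mu> \<nu>.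
                        (\<forall>a\<in>A1. 0 \<le> \<mu> a) \<and> (\<forall>i. 0 \<le> \<nu> i)}"
  have "C \<subseteq> K"
    unfolding C_def
  proof (rule hull_minimal)
    show "G \<subseteq> K"
    proof
      fix z assume "z \<in> G"
      then consider a where "a \<in> A1" "z = g a" | i where "z = e i" by (auto simp: G_def)
      then show "z \<in> K"
      proof cases
        case 1
        then show ?thesis unfolding K_def
          by (intro CollectI exI[of _ "\<lambda>a'. if a' = a then 1 else 0"] exI[of _ "\<lambda>_. 0"])
             (simp add: fin sum_ind_scale)
      next
        case 2
        then show ?thesis unfolding K_def
          by (intro CollectI exI[of _ "\<lambda>_. 0"] exI[of _ "\<lambda>i'. if i' = i then 1 else 0"])
             (simp add: sum_ind_scale)
      qed
    qed
    show "convex_cone K"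
      unfolding convex_cone_iff
    proof (intro conjI ballI allI impI)
      show "0 \<in> K" unfolding K_def
        by (intro CollectI exI[of _ "\<lambda>_. 0"]) simp
    next
      fix x y assume "x \<in> K" "y \<in> K"
      then obtain \<mu>1 \<nu>1 \<mu>2 \<nu>2 where
        x: "x = (\<Sum>a\<in>A1. \<mu>1 a *\<^sub>R g a) + (\<Sum>i\<in>UNIV. \<nu>1 i *\<^sub>R e i)" "\<forall>a\<in>A1. 0 \<le> \<mu>1 a" "\<forall>i. 0 \<le> \<nu>1 i"
        and y: "y = (\<Sum>a\<in>A1. \<mu>2 a *\<^sub>R g a) + (\<Sum>i\<in>UNIV. \<nu>2 i *\<^sub>R e i)" "\<forall>a\<in>A1. 0 \<le> \<mu>2 a" "\<forall>i. 0 \<le> \<nu>2 i"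
        unfolding K_def by blast
      show "x + y \<in> K" unfolding K_def
        apply (intro CollectI exI[of _ "\<lambda>a. \<mu>1 a + \<mu>2 a"] exI[of _ "\<lambda>i. \<nu>1 i + \<nu>2 i"])
        using x y by (simp add: scaleR_add_left sum.distrib algebra_simps)
    next
      fix x and c :: real assume "x \<in> K" "0 \<le> c"
      then obtain \<mu>1 \<nu>1 where
        x: "x = (\<Sum>a\<in>A1. \<mu>1 a *\<^sub>R g a) + (\<Sum>i\<in>UNIV. \<nu>1 i *\<^sub>R e i)" "\<forall>a\<in>A1. 0 \<le> \<mu>1 a" "\<forall>i. 0 \<le> \<nu>1 i"
        unfolding K_def by blast
      show "c *\<^sub>R x \<in> K" unfolding K_def
        apply (intro CollectI exI[of _ "\<lambda>a. c * \<mu>1 a"] exI[of _ "\<lambda>i. c * \<nu>1 i"])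
        using x \<open>0 \<le> c\<close> by (simp add: scaleR_add_right scaleR_sum_right)
    qed
  qed
  with wM obtain \<mu> \<nu> where
    wK: "w M = (\<Sum>a\<in>A1. \<mu> a *\<^sub>R g a) + (\<Sum>i\<in>UNIV. \<nu> i *\<^sub>R e i)" and
    \<mu>0: "\<forall>a\<in>A1. 0 \<le> \<mu> a" and \<nu>0: "\<forall>i. 0 \<le> \<nu> i"
    unfolding K_def by blast
  show ?thesis
  proof (intro exI conjI allI impI)
    show "\<forall>a\<in>A1. 0 \<le> \<mu> a" by fact
    fix i assume "P i"
    have "(\<Sum>i'\<in>UNIV. \<nu> i' * (- axis i' 1 $ i)) = - \<nu> i"
      by (simp add: axis_def sum_negf if_distrib cong: if_cong)
    then have "w M $ i = (\<Sum>a\<in>A1. \<mu> a * \<beta> i a) - \<nu> i"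
      using \<open>P i\<close> by (simp add: wK g_def e_def)
    then show "M \<le> \<alpha> i + (\<Sum>a\<in>A1. \<mu> a * \<beta> i a)"
      using \<open>P i\<close> \<nu>0[rule_format, of i] by (simp add: wc)
  qed
qed


lemma is_path_append:
  "is_path tlf hdf u (xs @ ys) v \<longleftrightarrow> (\<exists>w. is_path tlf hdf u xs w \<and> is_path tlf hdf w ys v)"
  by (induction xs arbitrary: u) auto

lemma path_shorten:
  "is_path tlf hdf u p v \<Longrightarrow> \<exists>q. distinct q \<and> is_path tlf hdf u q v \<and> set q \<subseteq> set p"
proof (induction p arbitrary: u)
  case Nil
  then show ?case by (intro exI[of _ "[]"]) auto
next
  case (Cons a p)
  then have ta: "tlf a = u" and pp: "is_path tlf hdf (hdf a) p v" by auto
  from Cons.IH[OF pp] obtain q' where q': "distinct q'" "is_path tlf hdf (hdf a) q' v" "set q' \<subseteq> set p"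
    by blast
  show ?case
  proof (cases "a \<in> set q'")
    case True
    then obtain xs ys where xs: "q' = xs @ a # ys" by (meson split_list)
    with q' obtain w where "is_path tlf hdf w (a # ys) v" by (auto simp: is_path_append)
    then have "is_path tlf hdf u (a # ys) v" using ta by simp
    moreover have "distinct (a # ys)" using q'(1) xs by simp
    moreover have "set (a # ys) \<subseteq> set (a # p)" using q'(3) xs by auto
    ultimately show ?thesis by blast
  next
    case False
    then show ?thesis using q' ta by (intro exI[of _ "a # q'"]) auto
  qed
qed

definition ind :: "'a list \<Rightarrow> 'a \<Rightarrow> real" where
  "ind q a = (if a \<in> set q then 1 else 0)"

lemma ind_conserv:
  fixes tlf hdf :: "'a::finite \<Rightarrow> 'v"
  shows "distinct q \<Longrightarrow> is_path tlf hdf u q v \<Longrightarrow>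
    (\<Sum>a\<in>{a. tlf a = i}. ind q a) - (\<Sum>a\<in>{a. hdf a = i}. ind q a)
      = (if i = u then 1 else 0) - (if i = v then 1 else 0)"
proof (induction q arbitrary: u)
  case Nil
  then show ?case by (simp add: ind_def)
next
  case (Cons a q)
  then have IH: "(\<Sum>a\<in>{a. tlf a = i}. ind q a) - (\<Sum>a\<in>{a. hdf a = i}. ind q a)
      = (if i = hdf a then 1 else 0) - (if i = v then 1 else 0)" and ta: "tlf a = u" by auto
  have e: "ind (a # q) b = ind q b + (if b = a then 1 else 0)" for b
    using Cons.prems(1) by (auto simp: ind_def)
  have s1: "(\<Sum>b\<in>{b. tlf b = i}. ind (a # q) b) = (\<Sum>b\<in>{b. tlf b = i}. ind q b) + (if tlf a = i then 1 else 0)"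
    unfolding e sum.distrib by (simp add: sum.delta)
  have s2: "(\<Sum>b\<in>{b. hdf b = i}. ind (a # q) b) = (\<Sum>b\<in>{b. hdf b = i}. ind q b) + (if hdf a = i then 1 else 0)"
    unfolding e sum.distrib by (simp add: sum.delta)
  have "(if tlf a = i then 1 else 0) = (if i = u then (1::real) else 0)" using ta by auto
  moreover have "(if hdf a = i then 1 else 0) = (if i = hdf a then (1::real) else 0)" by auto
  ultimately show ?case
    unfolding s1 s2 using IH by linarith
qed

lemma ind_flow:
  fixes tail head :: "'a::finite \<Rightarrow> 'v"
  assumes "distinct q" "is_path tail head orig q dest" "orig \<noteq> dest"
  shows "flow_feasible tail head orig dest (ind q)"
  unfolding flow_feasible_def
proof (intro conjI allI)
  fix a show "0 \<le> ind q a" by (simp add: ind_def)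
next
  fix i
  show "(\<Sum>a\<in>{a. tail a = i}. ind q a) - (\<Sum>a\<in>{a. head a = i}. ind q a) =
        (if i = orig then 1 else if i = dest then - 1 else 0)"
    using ind_conserv[OF assms(1,2), of i] assms(3) by auto
qed

lemma sum_ind: "(\<Sum>a\<in>UNIV. w a * ind q a) = sum w (set (q::('a::finite) list))"
proof -
  have "(\<Sum>a\<in>UNIV. w a * ind q a) = (\<Sum>a\<in>UNIV. if a \<in> set q then w a else 0)"
    by (rule sum.cong) (auto simp: ind_def)
  also have "\<dots> = sum w (set q)" by (simp add: sum.If_cases)
  finally show ?thesis .
qed

lemma shortest:
  fixes tail head :: "'a::finite \<Rightarrow> 'v" and w :: "'a \<Rightarrow> real"
  assumes w0: "\<forall>a. 0 \<le> w a" and od: "orig \<noteq> dest"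
    and ex: "\<exists>p. is_path tail head orig p dest"
  shows "\<exists>q. distinct q \<and> is_path tail head orig q dest \<and>
     (\<forall>y. flow_feasible tail head orig dest y \<longrightarrow> (\<Sum>a\<in>UNIV. w a * ind q a) \<le> (\<Sum>a\<in>UNIV. w a * y a))"
proof -
  define S where "S v = {q. distinct q \<and> is_path tail head orig q v}" for v
  have finS: "finite (S v)" for v
    by (rule finite_subset[OF _ finite_subset_distinct[of "UNIV::'a set"]]) (auto simp: S_def)
  define pc where "pc q = sum w (set q)" for q :: "'a list"
  define B where "B = sum w UNIV"
  have pc0: "0 \<le> pc q" for q using w0 by (simp add: pc_def sum_nonneg)
  have pcB: "pc q \<le> B" for q unfolding pc_def B_def
    by (rule sum_mono2) (use w0 in auto)
  define \<pi> where "\<pi> v = (if S v = {} then B else Min (pc ` S v))" for v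
  have \<pi>o: "\<pi> orig = 0"
  proof -
    have "[] \<in> S orig" by (simp add: S_def)
    then have ne: "S orig \<noteq> {}" by auto
    have "Min (pc ` S orig) \<le> pc []" using \<open>[] \<in> S orig\<close> finS by (intro Min_le) auto
    moreover have "Min (pc ` S orig) \<in> pc ` S orig" using ne finS by (intro Min_in) auto
    then obtain x where "Min (pc ` S orig) = pc x" by auto
    ultimately have "Min (pc ` S orig) = 0" using pc0[of x] by (simp add: pc_def)
    then show ?thesis using ne by (simp add: \<pi>_def)
  qed
  have \<pi>B: "\<pi> v \<le> B" for v
  proof (cases "S v = {}")
    case False
    then have "Min (pc ` S v) \<in> pc ` S v" using finS by (intro Min_in) auto
    then show ?thesis using pcB False by (auto simp: \<pi>_def)
  qed (simp add: \<pi>_def)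
  have \<pi>le: "\<pi> (head a) \<le> \<pi> (tail a) + w a" for a
  proof (cases "S (tail a) = {}")
    case True
    then have "\<pi> (tail a) = B" by (simp add: \<pi>_def)
    then show ?thesis using \<pi>B[of "head a"] w0[rule_format, of a] by linarith
  next
    case False
    then have "Min (pc ` S (tail a)) \<in> pc ` S (tail a)" using finS by (intro Min_in) auto
    then obtain q where q: "q \<in> S (tail a)" "\<pi> (tail a) = pc q" using False by (auto simp: \<pi>_def)
    then have "is_path tail head orig (q @ [a]) (head a)" by (auto simp: S_def is_path_append)
    from path_shorten[OF this] obtain q' where q': "distinct q'" "is_path tail head orig q' (head a)" "set q' \<subseteq> set (q @ [a])"
      by blast
    then have inS: "q' \<in> S (head a)" by (simp add: S_def)
    have "pc q' \<le> sum w (set (q @ [a]))" unfolding pc_def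
      by (rule sum_mono2) (use q' w0 in auto)
    also have "\<dots> \<le> pc q + w a" unfolding pc_def
      by (simp add: sum.insert_if w0)
    finally have "pc q' \<le> pc q + w a" .
    moreover have "\<pi> (head a) \<le> pc q'" using inS finS by (auto simp: \<pi>_def intro!: Min_le)
    ultimately show ?thesis using q by simp
  qed
  have dual: "\<pi> dest \<le> (\<Sum>a\<in>UNIV. w a * y a)" if y: "flow_feasible tail head orig dest y" for y
  proof -
    have y0: "\<forall>a. 0 \<le> y a" and cons: "\<And>i. (\<Sum>a\<in>{a. tail a = i}. y a) - (\<Sum>a\<in>{a. head a = i}. y a)
          = (if i = orig then 1 else if i = dest then -1 else 0)"
      using y by (auto simp: flow_feasible_def)
    define V where "V = range tail \<union> range head \<union> {orig, dest}"
    have finV: "finite V" by (simp add: V_def)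
    have grp: "(\<Sum>a\<in>UNIV. y a * \<pi> (f a)) = (\<Sum>v\<in>V. \<pi> v * (\<Sum>a\<in>{a. f a = v}. y a))"
      if "range f \<subseteq> V" for f :: "'a \<Rightarrow> 'v"
    proof -
      have "(\<Sum>a\<in>UNIV. y a * \<pi> (f a)) = (\<Sum>v\<in>V. \<Sum>a\<in>{a. a \<in> UNIV \<and> f a = v}. y a * \<pi> (f a))"
        using sum.group[of UNIV V f "\<lambda>a. y a * \<pi> (f a)"] finV that by simp
      also have "\<dots> = (\<Sum>v\<in>V. \<pi> v * (\<Sum>a\<in>{a. f a = v}. y a))"
        by (rule sum.cong) (auto simp: sum_distrib_left mult.commute)
      finally show ?thesis .
    qed
    have "(\<Sum>a\<in>UNIV. y a * (\<pi> (head a) - \<pi> (tail a))) \<le> (\<Sum>a\<in>UNIV. w a * y a)"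
    proof (rule sum_mono)
      fix a
      have "\<pi> (head a) - \<pi> (tail a) \<le> w a" using \<pi>le[of a] by simp
      then show "y a * (\<pi> (head a) - \<pi> (tail a)) \<le> w a * y a"
        using y0[rule_format, of a] by (metis mult.commute mult_left_mono)
    qed
    moreover have "(\<Sum>a\<in>UNIV. y a * (\<pi> (head a) - \<pi> (tail a)))
        = (\<Sum>v\<in>V. \<pi> v * (\<Sum>a\<in>{a. head a = v}. y a)) - (\<Sum>v\<in>V. \<pi> v * (\<Sum>a\<in>{a. tail a = v}. y a))"
    proof -
      have "range head \<subseteq> V" "range tail \<subseteq> V" by (auto simp: V_def)
      then show ?thesis using grp[of head] grp[of tail]
        by (simp add: right_diff_distrib sum_subtractf)
    qed
    moreover have "\<dots> = (\<Sum>v\<in>V. - (\<pi> v * ((if v = orig then 1 else 0) - (if v = dest then 1 else 0))))"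
      unfolding sum_subtractf[symmetric]
    proof (rule sum.cong)
      fix v
      show "\<pi> v * (\<Sum>a\<in>{a. head a = v}. y a) - \<pi> v * (\<Sum>a\<in>{a. tail a = v}. y a) =
         - (\<pi> v * ((if v = orig then 1 else 0) - (if v = dest then 1 else 0)))"
        using cons[of v] od by (auto simp: algebra_simps)
    qed simp
    moreover have "\<dots> = \<pi> dest - \<pi> orig"
    proof -
      have "(\<Sum>v\<in>V. - (\<pi> v * ((if v = orig then 1 else 0) - (if v = dest then 1 else 0))))
          = (\<Sum>v\<in>V. (if v = dest then \<pi> v else 0) - (if v = orig then \<pi> v else 0))"
        by (rule sum.cong) auto
      also have "\<dots> = \<pi> dest - \<pi> orig"
        using finV by (simp add: sum_subtractf sum.delta' V_def)
      finally show ?thesis .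
    qed
    ultimately show ?thesis using \<pi>o by linarith
  qed
  obtain p where "is_path tail head orig p dest" using ex by blast
  from path_shorten[OF this] obtain q0 where "distinct q0" "is_path tail head orig q0 dest" by blast
  then have "q0 \<in> S dest" by (simp add: S_def)
  then have ne: "S dest \<noteq> {}" by auto
  then have "Min (pc ` S dest) \<in> pc ` S dest" using finS by (intro Min_in) auto
  then obtain q where q: "q \<in> S dest" "\<pi> dest = pc q" using ne by (auto simp: \<pi>_def)
  show ?thesis
  proof (intro exI conjI allI impI)
    show "distinct q" "is_path tail head orig q dest" using q by (auto simp: S_def)
    fix y assume "flow_feasible tail head orig dest y"
    then show "(\<Sum>a\<in>UNIV. w a * ind q a) \<le> (\<Sum>a\<in>UNIV. w a * y a)"
      using dual q by (simp add: sum_ind pc_def)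
  qed
qed



theorem lemma2:
  fixes c :: "'a::finite \<Rightarrow> real" and A1 :: "'a set"
    and tail head :: "'a \<Rightarrow> 'v" and orig dest :: 'v and x :: "'a \<Rightarrow> real"
  assumes c_nonneg: "\<forall>a. 0 \<le> c a"
    and A1_ne: "A1 \<noteq> {}" and A1_proper: "A1 \<noteq> UNIV"
    and od: "orig \<noteq> dest"
    and tollfree_path: "\<exists>p. is_path tail head orig p dest \<and> set p \<inter> A1 = {}"
    and x_in_X: "flow_feasible tail head orig dest x"
  shows "bilevel_feasible c A1 tail head orig dest x \<longleftrightarrow>
         ereal (\<Sum>a\<in>UNIV. c a * x a) = pricing_g c A1 tail head orig dest x"
proof -
  define F where "F = pricing_f c A1 tail head orig dest"
  define L where "L t = leader_cost c A1 t x" for t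
  define cx where "cx = (\<Sum>a\<in>UNIV. c a * x a)"
  define tx where "tx t = (\<Sum>a\<in>A1. t a * x a)" for t :: "'a \<Rightarrow> real"
  have Lx: "L t = cx + tx t" for t by (simp add: L_def leader_cost_def cx_def tx_def)
  have Fneg: "F t = -\<infinity>" if "\<not> (\<forall>a\<in>A1. 0 \<le> t a)" for t
    unfolding F_def pricing_f_def by (rule if_not_P) (use that in blast)
  have Fle: "F t \<le> ereal (leader_cost c A1 t y)" if "flow_feasible tail head orig dest y" for t y
    using that by (auto simp: F_def pricing_f_def intro!: Inf_lower)
  have pex: "\<exists>p. is_path tail head orig p dest" using tollfree_path by blast
  have Fopt: "\<exists>q. distinct q \<and> is_path tail head orig q dest \<and> F t = ereal (leader_cost c A1 t (ind q))"
    if t0: "\<forall>a\<in>A1. 0 \<le> t a" for t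
  proof -
    define w where "w a = c a + (if a \<in> A1 then t a else 0)" for a
    have w0: "\<forall>a. 0 \<le> w a" using c_nonneg t0 by (simp add: w_def add_nonneg_nonneg)
    have lcw: "leader_cost c A1 t y = (\<Sum>a\<in>UNIV. w a * y a)" for y
    proof -
      have "(\<Sum>a\<in>UNIV. (if a \<in> A1 then t a else 0) * y a) = (\<Sum>a\<in>UNIV. if a \<in> A1 then t a * y a else 0)"
        by (rule sum.cong) auto
      also have "\<dots> = (\<Sum>a\<in>A1. t a * y a)" by (simp add: sum.If_cases)
      finally have "(\<Sum>a\<in>UNIV. (if a \<in> A1 then t a else 0) * y a) = (\<Sum>a\<in>A1. t a * y a)" .
      then show ?thesis by (simp add: leader_cost_def w_def distrib_right sum.distrib)
    qed
    obtain q where q: "distinct q" "is_path tail head orig q dest"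
      "\<forall>y. flow_feasible tail head orig dest y \<longrightarrow> (\<Sum>a\<in>UNIV. w a * ind q a) \<le> (\<Sum>a\<in>UNIV. w a * y a)"
      using shortest[OF w0 od pex] by blast
    have qf: "flow_feasible tail head orig dest (ind q)" using ind_flow[OF q(1,2) od] .
    have "F t = ereal (leader_cost c A1 t (ind q))"
    proof (rule antisym)
      show "F t \<le> ereal (leader_cost c A1 t (ind q))" using Fle[OF qf] .
      show "ereal (leader_cost c A1 t (ind q)) \<le> F t"
        unfolding F_def pricing_f_def using t0 q(3)
        by (auto simp: lcw intro!: Inf_greatest)
    qed
    then show ?thesis using q by blast
  qed
  have bf_iff: "bilevel_feasible c A1 tail head orig dest x \<longleftrightarrow> (\<exists>t. ereal (L t) \<le> F t)"
  proof
    assume "bilevel_feasible c A1 tail head orig dest x"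
    then obtain t z where "- F t \<le> ereal z" "z = - L t"
      unfolding bilevel_feasible_def F_def L_def by blast
    then have "- F t \<le> - ereal (L t)" by simp
    then show "\<exists>t. ereal (L t) \<le> F t" by (simp only: ereal_minus_le_minus) blast
  next
    assume "\<exists>t. ereal (L t) \<le> F t"
    then obtain t where t: "ereal (L t) \<le> F t" by blast
    show "bilevel_feasible c A1 tail head orig dest x"
      unfolding bilevel_feasible_def
    proof (intro conjI allI impI)
      fix t' z assume h: "- pricing_f c A1 tail head orig dest t' \<le> ereal z"
      have "F t' \<le> ereal (L t')" using Fle[OF x_in_X] by (simp add: L_def)
      then have "- ereal (L t') \<le> - F t'" by (simp only: ereal_minus_le_minus)
      then have "- ereal (L t') \<le> ereal z" using h unfolding F_def by (rule order_trans)
      then show "- leader_cost c A1 t' x \<le> z" by (simp add: L_def)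
    next
      show "\<exists>t z. - pricing_f c A1 tail head orig dest t \<le> ereal z \<and> z = - leader_cost c A1 t x"
      proof (intro exI[of _ t] exI[of _ "- L t"] conjI refl)
        have "- F t \<le> - ereal (L t)" using t by (simp only: ereal_minus_le_minus)
        then show "- pricing_f c A1 tail head orig dest t \<le> ereal (- L t)" by (simp add: F_def)
      qed (simp add: L_def)
    qed
  qed
  have Gdef: "pricing_g c A1 tail head orig dest x = (SUP t. F t - ereal (tx t))"
    by (simp add: pricing_g_def F_def tx_def)
  have Gle: "(SUP t. F t - ereal (tx t)) \<le> ereal cx"
  proof (rule SUP_least)
    fix t
    show "F t - ereal (tx t) \<le> ereal cx"
    proof (cases "\<forall>a\<in>A1. 0 \<le> t a")
      case True
      have "F t \<le> ereal (L t)" using Fle[OF x_in_X] by (simp add: L_def)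
      then have "F t - ereal (tx t) \<le> ereal (L t) - ereal (tx t)"
        by (rule ereal_minus_mono) simp
      then show ?thesis by (simp add: Lx)
    next
      case False
      then show ?thesis by (simp add: Fneg)
    qed
  qed
  have decomp: "leader_cost c A1 t (ind q) - tx t = (\<Sum>a\<in>UNIV. c a * (if a \<in> set q then 1 else 0))
     + (\<Sum>a\<in>A1. t a * ((if a \<in> set q then 1 else 0) - x a))" for t q
    by (simp add: leader_cost_def tx_def ind_def right_diff_distrib sum_subtractf)
  show ?thesis
  proof
    assume "bilevel_feasible c A1 tail head orig dest x"
    then obtain t where t: "ereal (L t) \<le> F t" using bf_iff by blast
    have "ereal (L t) - ereal (tx t) \<le> F t - ereal (tx t)"
      using t by (rule ereal_minus_mono) simp
    then have "ereal cx \<le> F t - ereal (tx t)" by (simp add: Lx)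
    also have "\<dots> \<le> (SUP t. F t - ereal (tx t))" by (rule SUP_upper) simp
    finally show "ereal (\<Sum>a\<in>UNIV. c a * x a) = pricing_g c A1 tail head orig dest x"
      using Gle by (simp add: Gdef cx_def)
  next
    assume "ereal (\<Sum>a\<in>UNIV. c a * x a) = pricing_g c A1 tail head orig dest x"
    then have G: "(SUP t. F t - ereal (tx t)) = ereal cx" by (simp add: Gdef cx_def)
    define P where "P T = (\<exists>q. distinct q \<and> is_path tail head orig q dest \<and> set q = T)" for T
    define \<alpha> where "\<alpha> T = (\<Sum>a\<in>UNIV. c a * (if a \<in> T then 1 else 0))" for T :: "'a set"
    define \<beta> where "\<beta> T a = (if a \<in> T then 1 else 0) - x a" for T :: "'a set" and a
    have "\<exists>t. (\<forall>a\<in>A1. 0 \<le> t a) \<and> (\<forall>T. P T \<longrightarrow> cx \<le> \<alpha> T + (\<Sum>a\<in>A1. t a * \<beta> T a))"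
    proof (rule cone_attain)
      show "finite A1" by simp
      fix m assume "m < cx"
      then have "ereal m < (SUP t. F t - ereal (tx t))" using G by simp
      then obtain t where tm: "ereal m < F t - ereal (tx t)" by (auto simp: less_SUP_iff)
      have t0: "\<forall>a\<in>A1. 0 \<le> t a"
      proof (rule ccontr)
        assume "\<not> (\<forall>a\<in>A1. 0 \<le> t a)"
        then have "F t = -\<infinity>" by (rule Fneg)
        then show False using tm by simp
      qed
      have "\<forall>T. P T \<longrightarrow> m < \<alpha> T + (\<Sum>a\<in>A1. t a * \<beta> T a)"
      proof (intro allI impI)
        fix T assume "P T"
        then obtain q where q: "distinct q" "is_path tail head orig q dest" "set q = T"
          by (auto simp: P_def)
        have "F t - ereal (tx t) \<le> ereal (leader_cost c A1 t (ind q)) - ereal (tx t)"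
          using Fle[OF ind_flow[OF q(1,2) od]] by (rule ereal_minus_mono) simp
        also have "\<dots> = ereal (leader_cost c A1 t (ind q) - tx t)" by simp
        finally have le: "F t - ereal (tx t) \<le> ereal (leader_cost c A1 t (ind q) - tx t)" .
        have "ereal m < ereal (leader_cost c A1 t (ind q) - tx t)" using tm le by (rule less_le_trans)
        then have "m < leader_cost c A1 t (ind q) - tx t" by simp
        then show "m < \<alpha> T + (\<Sum>a\<in>A1. t a * \<beta> T a)"
          using decomp[of t q] q(3) by (simp add: \<alpha>_def \<beta>_def)
      qed
      with t0 show "\<exists>t. (\<forall>a\<in>A1. 0 \<le> t a) \<and> (\<forall>T. P T \<longrightarrow> m < \<alpha> T + (\<Sum>a\<in>A1. t a * \<beta> T a))"
        by blast
    qed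
    then obtain t where t0: "\<forall>a\<in>A1. 0 \<le> t a"
      and tP: "\<forall>T. P T \<longrightarrow> cx \<le> \<alpha> T + (\<Sum>a\<in>A1. t a * \<beta> T a)" by blast
    obtain q where q: "distinct q" "is_path tail head orig q dest"
      "F t = ereal (leader_cost c A1 t (ind q))" using Fopt[OF t0] by blast
    have "P (set q)" using q by (auto simp: P_def)
    with tP have "cx \<le> \<alpha> (set q) + (\<Sum>a\<in>A1. t a * \<beta> (set q) a)" by blast
    then have "cx \<le> leader_cost c A1 t (ind q) - tx t"
      using decomp[of t q] by (simp add: \<alpha>_def \<beta>_def)
    then have "ereal (L t) \<le> F t" using q(3) by (simp add: Lx)
    then show "bilevel_feasible c A1 tail head orig dest x" using bf_iff by blast
  qed
qed

end
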